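(* Let $G$ be a commutative group, $H$ a subgroup, $G'=G/H$ and $\varphi:G\to G'$ the natural homomorphism, $1<p<\infty$, and $f\in\ell^1(G)$ nonnegative. Define $f_\varphi$ on $G'$ by $f_\varphi(x)=\gamma_p\bigl(f|_{\varphi^{-1}(x)}\bigr)$. Then $\gamma_p(f)\ge\gamma_p(f_\varphi)$, where $\gamma_p(f_\varphi)$ is computed in $G'$.
   Context: For nonnegative functions $f,g$ on a commutative group $K$, $(f\star g)(x)=\max_t f(t)g(x-t)$. For nonnegative $f\in\ell^1(K)$ and $1/p+1/q=1$, $\gamma_p(f)=\inf_{g,h}\frac{\|f\star g\star h\|_1}{\|g\|_p\|h\|_q}$, infimum over nonzero nonnegative $g,h\in\ell^1(K)$. Here $f|_{\varphi^{-1}(x)}$ denotes the function on $G$ equal to $f$ on the coset $\varphi^{-1}(x)$ and $0$ elsewhere, and $\gamma_p$ of it is computed in $G$. *)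

theory Defs
  imports "HOL-Analysis.Analysis" "HOL-Algebra.Algebra"
begin

definition mconv :: "('a, 'b) monoid_scheme \<Rightarrow> ('a \<Rightarrow> real) \<Rightarrow> ('a \<Rightarrow> real) \<Rightarrow> 'a \<Rightarrow> real" where
  "mconv K f g x = (SUP t\<in>carrier K. f t * g (x \<otimes>\<^bsub>K\<^esub> inv\<^bsub>K\<^esub> t))"

definition l1_nonneg :: "('a, 'b) monoid_scheme \<Rightarrow> ('a \<Rightarrow> real) \<Rightarrow> bool" where
  "l1_nonneg K g \<longleftrightarrow> (\<forall>x\<in>carrier K. 0 \<le> g x) \<and> g summable_on carrier K"

definition lp_norm :: "('a, 'b) monoid_scheme \<Rightarrow> real \<Rightarrow> ('a \<Rightarrow> real) \<Rightarrow> real" where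
  "lp_norm K p g = (\<Sum>\<^sub>\<infinity>x\<in>carrier K. \<bar>g x\<bar> powr p) powr (1 / p)"

definition l1_norm :: "('a, 'b) monoid_scheme \<Rightarrow> ('a \<Rightarrow> real) \<Rightarrow> real" where
  "l1_norm K g = (\<Sum>\<^sub>\<infinity>x\<in>carrier K. \<bar>g x\<bar>)"

definition gamma_p :: "('a, 'b) monoid_scheme \<Rightarrow> real \<Rightarrow> ('a \<Rightarrow> real) \<Rightarrow> real" where
  "gamma_p K p f = Inf {l1_norm K (mconv K (mconv K f g) h) / (lp_norm K p g * lp_norm K (p / (p - 1)) h) | g h.
      l1_nonneg K g \<and> (\<exists>x\<in>carrier K. g x \<noteq> 0) \<and> l1_nonneg K h \<and> (\<exists>x\<in>carrier K. h x \<noteq> 0)}"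

end

theory Submission
  imports Defs
begin


lemma term_le_infsum:
  fixes u :: "'a \<Rightarrow> real"
  assumes "u summable_on A" "\<And>y. y \<in> A \<Longrightarrow> 0 \<le> u y" "x \<in> A"
  shows "u x \<le> infsum u A"
  using finite_sum_le_infsum[of u A "{x}"] assms by auto

lemma finsum_infsum:
  fixes w :: "'b \<Rightarrow> 'a \<Rightarrow> real"
  assumes "finite F" "\<And>a. a \<in> F \<Longrightarrow> w a summable_on A"
  shows "(\<lambda>t. \<Sum>a\<in>F. w a t) summable_on A \<and> infsum (\<lambda>t. \<Sum>a\<in>F. w a t) A = (\<Sum>a\<in>F. infsum (w a) A)"
  using assms
proof (induction F rule: finite_induct)
  case empty then show ?case by simp
next
  case (insert b F)
  then have s: "w b summable_on A" "(\<lambda>t. \<Sum>a\<in>F. w a t) summable_on A"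
     and e: "infsum (\<lambda>t. \<Sum>a\<in>F. w a t) A = (\<Sum>a\<in>F. infsum (w a) A)" by auto
  show ?case using insert.hyps s e by (simp add: summable_on_add infsum_add)
qed

lemma partition_infsum:
  fixes u :: "'a \<Rightarrow> real"
  assumes "u summable_on (\<Union>C)" "pairwise disjnt C"
  shows "(\<lambda>c. infsum u c) summable_on C \<and> infsum (\<lambda>c. infsum u c) C = infsum u (\<Union>C)"
proof -
  have inj: "inj_on snd (Sigma C (\<lambda>c. c))" using assms(2)
    by (auto simp: inj_on_def pairwise_def disjnt_def)
  have im: "snd ` Sigma C (\<lambda>c. c) = \<Union>C" by force
  have eq: "(\<lambda>(c,y). u y) = u \<circ> snd" by auto
  have s: "(\<lambda>(c,y). u y) summable_on Sigma C (\<lambda>c. c)"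
    unfolding eq using summable_on_reindex[OF inj, of u] assms(1) im by simp
  have "infsum (\<lambda>c. infsum u c) C = infsum (\<lambda>(c,y). u y) (Sigma C (\<lambda>c. c))"
    using infsum_Sigma'_banach[of "\<lambda>c y. u y" C "\<lambda>c. c"] s by simp
  also have "\<dots> = infsum u (\<Union>C)" unfolding eq using infsum_reindex[OF inj, of u] im by simp
  finally show ?thesis using summable_on_Sigma_banach[of "\<lambda>c y. u y" C "\<lambda>c. c"] s by simp
qed

lemma l1D:
  assumes "l1_nonneg K u"
  shows "\<And>x. x \<in> carrier K \<Longrightarrow> 0 \<le> u x" "u summable_on carrier K"
  using assms by (auto simp: l1_nonneg_def)

lemma lp_nonneg: "0 \<le> lp_norm K r u"
  by (simp add: lp_norm_def)

lemma l1_norm_nonneg: "0 \<le> l1_norm K u"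
  by (simp add: l1_norm_def infsum_nonneg)

lemma lp_zero:
  assumes "\<And>x. x \<in> carrier K \<Longrightarrow> u x = 0"
  shows "lp_norm K r u = 0"
proof -
  have "infsum (\<lambda>x. \<bar>u x\<bar> powr r) (carrier K) = infsum (\<lambda>x. 0) (carrier K)"
    by (rule infsum_cong) (simp add: assms)
  then show ?thesis by (simp add: lp_norm_def)
qed

lemma lp_le_l1:
  assumes u: "l1_nonneg K u" and r: "1 \<le> r"
  shows "(\<lambda>x. \<bar>u x\<bar> powr r) summable_on carrier K" "lp_norm K r u \<le> l1_norm K u"
proof -
  define S where "S = infsum u (carrier K)"
  have S0: "0 \<le> S" unfolding S_def using l1D[OF u] by (simp add: infsum_nonneg)
  have l1: "l1_norm K u = S" unfolding S_def l1_norm_def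
    by (rule infsum_cong) (simp add: l1D(1)[OF u])
  have bnd: "\<bar>u x\<bar> powr r \<le> u x * S powr (r - 1)" if x: "x \<in> carrier K" for x
  proof (cases "u x = 0")
    case True then show ?thesis by simp
  next
    case False
    have ux: "0 < u x" using False l1D(1)[OF u x] by simp
    have le: "u x \<le> S" unfolding S_def using term_le_infsum[OF l1D(2)[OF u] l1D(1)[OF u] x] .
    have "\<bar>u x\<bar> powr r = u x * u x powr (r - 1)"
      using ux powr_add[of "u x" 1 "r - 1"] by simp
    also have "\<dots> \<le> u x * S powr (r - 1)"
      using ux le r by (intro mult_left_mono powr_mono2) auto
    finally show ?thesis .
  qed
  have sm: "(\<lambda>x. u x * S powr (r - 1)) summable_on carrier K"
    using summable_on_cmult_left[OF l1D(2)[OF u]] by simp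
  show s: "(\<lambda>x. \<bar>u x\<bar> powr r) summable_on carrier K"
    by (rule summable_on_comparison_test[OF sm]) (use bnd in auto)
  have "infsum (\<lambda>x. \<bar>u x\<bar> powr r) (carrier K) \<le> infsum (\<lambda>x. u x * S powr (r - 1)) (carrier K)"
    by (rule infsum_mono[OF s sm bnd])
  also have "\<dots> = S * S powr (r - 1)" unfolding S_def by (simp add: infsum_cmult_left')
  also have "\<dots> = S powr r"
  proof (cases "S = 0")
    case True then show ?thesis using r by simp
  next
    case False
    then show ?thesis using S0 powr_add[of S 1 "r - 1"] by simp
  qed
  finally have "infsum (\<lambda>x. \<bar>u x\<bar> powr r) (carrier K) \<le> S powr r" .
  then have "lp_norm K r u \<le> (S powr r) powr (1 / r)"
    unfolding lp_norm_def using r by (intro powr_mono2) (auto intro: infsum_nonneg)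
  also have "\<dots> = S" using r S0 by (simp add: powr_powr)
  finally show "lp_norm K r u \<le> l1_norm K u" using l1 by simp
qed

lemma lp_pos:
  assumes u: "l1_nonneg K u" and r: "1 \<le> r" and x: "x \<in> carrier K" "u x \<noteq> 0"
  shows "0 < lp_norm K r u"
proof -
  have "0 < \<bar>u x\<bar> powr r" using x by simp
  also have "\<dots> \<le> infsum (\<lambda>x. \<bar>u x\<bar> powr r) (carrier K)"
    by (rule term_le_infsum[OF lp_le_l1(1)[OF u r] _ x(1)]) simp
  finally show ?thesis unfolding lp_norm_def by simp
qed



context group begin

lemma mconv_bdd:
  assumes u: "l1_nonneg G u" and v: "l1_nonneg G v" and a: "a \<in> carrier G"
  shows "bdd_above ((\<lambda>t. u t * v (a \<otimes> inv t)) ` carrier G)"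
proof -
  have "u t * v (a \<otimes> inv t) \<le> infsum u (carrier G) * infsum v (carrier G)" if t: "t \<in> carrier G" for t
  proof (rule mult_mono)
    show "u t \<le> infsum u (carrier G)" using term_le_infsum[OF l1D(2)[OF u] l1D(1)[OF u] t] .
    show "v (a \<otimes> inv t) \<le> infsum v (carrier G)"
      using term_le_infsum[OF l1D(2)[OF v] l1D(1)[OF v]] t a by simp
    show "0 \<le> infsum u (carrier G)" using l1D[OF u] by (simp add: infsum_nonneg)
    show "0 \<le> v (a \<otimes> inv t)" using l1D(1)[OF v] t a by simp
  qed
  then show ?thesis by (auto simp: bdd_above_def)
qed

lemma mconv_upper:
  assumes u: "l1_nonneg G u" and v: "l1_nonneg G v" and a: "a \<in> carrier G" and t: "t \<in> carrier G"
  shows "u t * v (a \<otimes> inv t) \<le> mconv G u v a"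
  unfolding mconv_def by (rule cSUP_upper[OF t mconv_bdd[OF u v a]])

lemma mconv_nonneg:
  assumes u: "l1_nonneg G u" and v: "l1_nonneg G v" and a: "a \<in> carrier G"
  shows "0 \<le> mconv G u v a"
proof -
  have "0 \<le> u \<one> * v (a \<otimes> inv \<one>)" using l1D(1)[OF u] l1D(1)[OF v] a by simp
  also have "\<dots> \<le> mconv G u v a" by (rule mconv_upper[OF u v a]) simp
  finally show ?thesis .
qed

lemma prod_summable:
  assumes u: "l1_nonneg G u" and v: "l1_nonneg G v" and a: "a \<in> carrier G"
  shows "(\<lambda>t. u t * v (a \<otimes> inv t)) summable_on carrier G"
proof (rule summable_on_comparison_test)
  show "(\<lambda>t. u t * infsum v (carrier G)) summable_on carrier G"
    by (rule summable_on_cmult_left[OF l1D(2)[OF u]])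
  fix t assume t: "t \<in> carrier G"
  show "u t * v (a \<otimes> inv t) \<le> u t * infsum v (carrier G)"
    using term_le_infsum[OF l1D(2)[OF v] l1D(1)[OF v]] t a l1D(1)[OF u t]
    by (intro mult_left_mono) auto
  show "0 \<le> u t * v (a \<otimes> inv t)" using l1D(1)[OF u] l1D(1)[OF v] t a by simp
qed

lemma mconv_le_infsum:
  assumes u: "l1_nonneg G u" and v: "l1_nonneg G v" and a: "a \<in> carrier G"
  shows "mconv G u v a \<le> infsum (\<lambda>t. u t * v (a \<otimes> inv t)) (carrier G)"
  unfolding mconv_def
proof (rule cSUP_least)
  show "carrier G \<noteq> {}" by auto
  fix t assume t: "t \<in> carrier G"
  show "u t * v (a \<otimes> inv t) \<le> infsum (\<lambda>t. u t * v (a \<otimes> inv t)) (carrier G)"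
    by (rule term_le_infsum[OF prod_summable[OF u v a] _ t])
       (use l1D(1)[OF u] l1D(1)[OF v] a in auto)
qed

lemma mconv_l1:
  assumes u: "l1_nonneg G u" and v: "l1_nonneg G v"
  shows "l1_nonneg G (mconv G u v)"
proof -
  define U where "U = infsum u (carrier G)"
  define V where "V = infsum v (carrier G)"
  have bnd: "sum (mconv G u v) F \<le> U * V" if F: "finite F" "F \<subseteq> carrier G" for F
  proof -
    have FS: "(\<lambda>t. \<Sum>a\<in>F. u t * v (a \<otimes> inv t)) summable_on carrier G \<and>
       infsum (\<lambda>t. \<Sum>a\<in>F. u t * v (a \<otimes> inv t)) (carrier G) = (\<Sum>a\<in>F. infsum (\<lambda>t. u t * v (a \<otimes> inv t)) (carrier G))"
      by (rule finsum_infsum) (use F prod_summable[OF u v] in auto)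
    have "sum (mconv G u v) F \<le> (\<Sum>a\<in>F. infsum (\<lambda>t. u t * v (a \<otimes> inv t)) (carrier G))"
      using F by (intro sum_mono mconv_le_infsum[OF u v]) auto
    also have "\<dots> = infsum (\<lambda>t. \<Sum>a\<in>F. u t * v (a \<otimes> inv t)) (carrier G)"
      using FS by simp
    also have "\<dots> \<le> infsum (\<lambda>t. u t * V) (carrier G)"
    proof (rule infsum_mono)
      show "(\<lambda>t. \<Sum>a\<in>F. u t * v (a \<otimes> inv t)) summable_on carrier G"
        using FS by simp
      show "(\<lambda>t. u t * V) summable_on carrier G"
        by (rule summable_on_cmult_left[OF l1D(2)[OF u]])
      fix t assume t: "t \<in> carrier G"
      have inj: "inj_on (\<lambda>a. a \<otimes> inv t) F"
        by (rule inj_onI) (metis F(2) subsetD t inv_closed right_cancel)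
      have "(\<Sum>a\<in>F. v (a \<otimes> inv t)) = sum v ((\<lambda>a. a \<otimes> inv t) ` F)"
        using sum.reindex[OF inj, of v] by simp
      also have "\<dots> \<le> V" unfolding V_def
        by (rule finite_sum_le_infsum[OF l1D(2)[OF v]]) (use F t l1D(1)[OF v] in auto)
      finally have "(\<Sum>a\<in>F. v (a \<otimes> inv t)) \<le> V" .
      then show "(\<Sum>a\<in>F. u t * v (a \<otimes> inv t)) \<le> u t * V"
        using l1D(1)[OF u t] by (simp add: sum_distrib_left[symmetric] mult_left_mono)
    qed
    also have "\<dots> = U * V" unfolding U_def by (simp add: infsum_cmult_left')
    finally show ?thesis .
  qed
  show ?thesis unfolding l1_nonneg_def
  proof
    show "\<forall>x\<in>carrier G. 0 \<le> mconv G u v x" using mconv_nonneg[OF u v] by auto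
    show "mconv G u v summable_on carrier G"
      by (rule nonneg_bdd_above_summable_on) (use mconv_nonneg[OF u v] bnd in \<open>auto simp: bdd_above_def\<close>)
  qed
qed

lemma mconv_mono:
  assumes u2: "l1_nonneg G u2" and v2: "l1_nonneg G v2"
    and u1: "\<And>x. x \<in> carrier G \<Longrightarrow> 0 \<le> u1 x \<and> u1 x \<le> u2 x"
    and v1: "\<And>x. x \<in> carrier G \<Longrightarrow> 0 \<le> v1 x \<and> v1 x \<le> v2 x"
    and a: "a \<in> carrier G"
  shows "mconv G u1 v1 a \<le> mconv G u2 v2 a"
  unfolding mconv_def
proof (rule cSUP_least)
  show "carrier G \<noteq> {}" by auto
  fix t assume t: "t \<in> carrier G"
  show "u1 t * v1 (a \<otimes> inv t) \<le> (SUP t\<in>carrier G. u2 t * v2 (a \<otimes> inv t))"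
  proof (rule cSUP_upper2[OF mconv_bdd[OF u2 v2 a] t])
    show "u1 t * v1 (a \<otimes> inv t) \<le> u2 t * v2 (a \<otimes> inv t)"
      using u1[OF t] v1[of "a \<otimes> inv t"] a t by (intro mult_mono) auto
  qed
qed

definition delta :: "'a \<Rightarrow> real" where "delta x = (if x = \<one> then 1 else 0)"

lemma delta_l1: "l1_nonneg G delta"
  unfolding l1_nonneg_def
proof
  show "\<forall>x\<in>carrier G. 0 \<le> delta x" by (simp add: delta_def)
  have "delta summable_on carrier G \<longleftrightarrow> delta summable_on {\<one>}"
    by (rule summable_on_cong_neutral) (auto simp: delta_def)
  then show "delta summable_on carrier G" by simp
qed

lemma delta_lp:
  assumes "0 < r" shows "lp_norm G r delta = 1"
proof -
  have "infsum (\<lambda>x. \<bar>delta x\<bar> powr r) (carrier G) = infsum (\<lambda>x. \<bar>delta x\<bar> powr r) {\<one>}"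
    by (rule infsum_cong_neutral) (auto simp: delta_def)
  then show ?thesis by (simp add: lp_norm_def delta_def)
qed

lemma mconv_delta:
  assumes w: "\<And>x. x \<in> carrier G \<Longrightarrow> 0 \<le> w x" and a: "a \<in> carrier G"
  shows "mconv G w delta a = w a"
proof -
  have le: "w t * delta (a \<otimes> inv t) \<le> w a" if t: "t \<in> carrier G" for t
  proof (cases "a \<otimes> inv t = \<one>")
    case True
    then have "a = t" using t a inv_solve_right'[of "\<one>" a t] by simp
    then show ?thesis using True by (simp add: delta_def)
  next
    case False
    then have "delta (a \<otimes> inv t) = 0" by (simp add: delta_def)
    then show ?thesis using w[OF a] by simp
  qed
  show ?thesis unfolding mconv_def
  proof (rule order.antisym)
    show "(SUP t\<in>carrier G. w t * delta (a \<otimes> inv t)) \<le> w a"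
      by (rule cSUP_least) (use le in auto)
    show "w a \<le> (SUP t\<in>carrier G. w t * delta (a \<otimes> inv t))"
    proof (rule cSUP_upper2[where x=a])
      show "bdd_above ((\<lambda>t. w t * delta (a \<otimes> inv t)) ` carrier G)"
        by (rule bdd_aboveI[where M="w a"]) (use le in auto)
    qed (use a in \<open>auto simp: delta_def\<close>)
  qed
qed

lemma gamma_set_nonneg:
  "x \<in> {l1_norm G (mconv G (mconv G f g) h) / (lp_norm G p g * lp_norm G (p / (p - 1)) h) | g h.
      l1_nonneg G g \<and> (\<exists>x\<in>carrier G. g x \<noteq> 0) \<and> l1_nonneg G h \<and> (\<exists>x\<in>carrier G. h x \<noteq> 0)} \<Longrightarrow> 0 \<le> x"
  by (auto intro!: divide_nonneg_nonneg l1_norm_nonneg simp: lp_nonneg)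

lemma gamma_le:
  assumes "l1_nonneg G g" "x \<in> carrier G" "g x \<noteq> 0" "l1_nonneg G h" "y \<in> carrier G" "h y \<noteq> 0"
  shows "gamma_p G p f \<le> l1_norm G (mconv G (mconv G f g) h) / (lp_norm G p g * lp_norm G (p / (p - 1)) h)"
  unfolding gamma_p_def
  apply (rule cInf_lower)
  using assms apply blast
  apply (rule bdd_belowI)
  apply (erule gamma_set_nonneg)
  done

lemma gamma_nonneg: "0 \<le> gamma_p G p f"
  unfolding gamma_p_def
proof (rule cInf_greatest)
  have "delta \<one> \<noteq> 0" by (simp add: delta_def)
  then show "{l1_norm G (mconv G (mconv G f g) h) / (lp_norm G p g * lp_norm G (p / (p - 1)) h) | g h.
      l1_nonneg G g \<and> (\<exists>x\<in>carrier G. g x \<noteq> 0) \<and> l1_nonneg G h \<and> (\<exists>x\<in>carrier G. h x \<noteq> 0)} \<noteq> {}"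
    using delta_l1 by blast
qed (rule gamma_set_nonneg)

lemma gamma_le_l1:
  assumes f: "\<And>x. x \<in> carrier G \<Longrightarrow> 0 \<le> f x" and p: "1 < p"
  shows "gamma_p G p f \<le> l1_norm G f"
proof -
  have "gamma_p G p f \<le> l1_norm G (mconv G (mconv G f delta) delta) / (lp_norm G p delta * lp_norm G (p / (p - 1)) delta)"
    by (rule gamma_le[OF delta_l1 _ _ delta_l1, of \<one> \<one>]) (auto simp: delta_def)
  also have "\<dots> = l1_norm G (mconv G (mconv G f delta) delta)"
    using p by (simp add: delta_lp)
  also have "\<dots> = l1_norm G f" unfolding l1_norm_def
    by (rule infsum_cong) (simp add: mconv_delta f)
  finally show ?thesis .
qed

end



lemma (in comm_group) alg3:
  "t \<in> carrier G \<Longrightarrow> s \<in> carrier G \<Longrightarrow> z \<in> carrier G \<Longrightarrow> t \<otimes> (s \<otimes> inv t) \<otimes> (z \<otimes> inv s) = z"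
proof -
  assume t: "t \<in> carrier G" and s: "s \<in> carrier G" and z: "z \<in> carrier G"
  have "t \<otimes> (s \<otimes> inv t) = s" using t s by (simp add: m_comm[of s "inv t"] m_assoc[symmetric])
  moreover have "s \<otimes> (z \<otimes> inv s) = z" using s z by (simp add: m_comm[of z "inv s"] m_assoc[symmetric])
  ultimately show ?thesis by simp
qed

definition restr :: "('a, 'b) monoid_scheme \<Rightarrow> 'a set \<Rightarrow> 'a set \<Rightarrow> ('a \<Rightarrow> real) \<Rightarrow> 'a \<Rightarrow> real" where
  "restr K H c u = (\<lambda>a. if a \<in> carrier K \<and> r_coset K H a = c then u a else 0)"

locale qsetup = comm_group + fixes H assumes sub: "subgroup H G"
begin

lemma nrm: "H \<lhd> G" by (rule subgroup_imp_normal[OF sub])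
lemma cQ: "comm_group (G Mod H)" by (rule abelian_FactGroup[OF sub])
lemma grpQ: "group (G Mod H)" by (rule normal.factorgroup_is_group[OF nrm])
lemma carrQ: "carrier (G Mod H) = rcosets H" by (simp add: FactGroup_def)
lemma hsub: "H \<subseteq> carrier G" using sub by (simp add: subgroup_def)

lemma coset_mem:
  assumes c: "c \<in> rcosets H" and a: "a \<in> carrier G"
  shows "a \<in> c \<longleftrightarrow> H #> a = c"
proof -
  obtain b where b: "b \<in> carrier G" "c = H #> b" using c by (auto simp: RCOSETS_def)
  show ?thesis
  proof
    assume "a \<in> c" then show "H #> a = c" using repr_independence[of a H b] b sub by simp
  next
    assume "H #> a = c" then show "a \<in> c" using rcos_self[OF a sub] by simp
  qed
qed

lemma coset_sub: "c \<in> rcosets H \<Longrightarrow> c \<subseteq> carrier G"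
  using hsub by (auto simp: RCOSETS_def intro: r_coset_subset_G[THEN subsetD])

lemma restr_eq: "c \<in> rcosets H \<Longrightarrow> restr G H c u a = (if a \<in> c then u a else 0)"
  using coset_mem[of c a] coset_sub[of c] by (auto simp: restr_def)

lemma phi_in: "a \<in> carrier G \<Longrightarrow> H #> a \<in> carrier (G Mod H)"
  using hsub by (simp add: carrQ rcosetsI)

lemma phi_mult: "a \<in> carrier G \<Longrightarrow> b \<in> carrier G \<Longrightarrow> H #> (a \<otimes> b) = (H #> a) \<otimes>\<^bsub>G Mod H\<^esub> (H #> b)"
  by (simp add: normal.rcos_sum[OF nrm])

lemma partition:
  fixes u :: "'a \<Rightarrow> real"
  assumes "u summable_on carrier G"
  shows "(\<lambda>c. infsum u c) summable_on rcosets H \<and> infsum (\<lambda>c. infsum u c) (rcosets H) = infsum u (carrier G)"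
  using partition_infsum[of u "rcosets H"] assms rcosets_part_G[OF sub] rcos_disjoint[OF sub] by simp

lemma restr_bounds: "l1_nonneg G u \<Longrightarrow> x \<in> carrier G \<Longrightarrow> 0 \<le> restr G H c u x \<and> restr G H c u x \<le> u x"
  by (auto simp: restr_def l1D)

lemma restr_l1: assumes u: "l1_nonneg G u" shows "l1_nonneg G (restr G H c u)"
  unfolding l1_nonneg_def
proof
  show "\<forall>x\<in>carrier G. 0 \<le> restr G H c u x" using restr_bounds[OF u] by auto
  show "restr G H c u summable_on carrier G"
    by (rule summable_on_comparison_test[OF l1D(2)[OF u]]) (use restr_bounds[OF u] in auto)
qed

lemma l1_restr:
  assumes c: "c \<in> rcosets H" and u: "l1_nonneg G u"
  shows "l1_norm G (restr G H c u) = infsum u c"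
  unfolding l1_norm_def
  by (rule infsum_cong_neutral) (use coset_sub[OF c] restr_eq[OF c] l1D(1)[OF u] in auto)

lemma lp_restr:
  assumes c: "c \<in> rcosets H" and u: "l1_nonneg G u" and r: "0 < r"
  shows "lp_norm G r (restr G H c u) powr r = infsum (\<lambda>a. \<bar>u a\<bar> powr r) c"
proof -
  have "infsum (\<lambda>a. \<bar>restr G H c u a\<bar> powr r) (carrier G) = infsum (\<lambda>a. \<bar>u a\<bar> powr r) c"
    by (rule infsum_cong_neutral) (use coset_sub[OF c] restr_eq[OF c] in auto)
  moreover have "0 \<le> infsum (\<lambda>a. \<bar>u a\<bar> powr r) c" by (simp add: infsum_nonneg)
  ultimately show ?thesis using r by (simp add: lp_norm_def powr_powr)
qed

lemma Fl1:
  assumes f: "l1_nonneg G f" and p: "1 < p"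
  shows "l1_nonneg (G Mod H) (\<lambda>c. gamma_p G p (restr G H c f))"
  unfolding l1_nonneg_def carrQ
proof
  show "\<forall>x\<in>rcosets H. 0 \<le> gamma_p G p (restr G H x f)" by (simp add: gamma_nonneg)
  show "(\<lambda>c. gamma_p G p (restr G H c f)) summable_on rcosets H"
  proof (rule summable_on_comparison_test)
    show "(\<lambda>c. infsum f c) summable_on rcosets H" using partition[OF l1D(2)[OF f]] by simp
    fix c assume c: "c \<in> rcosets H"
    show "0 \<le> gamma_p G p (restr G H c f)" by (simp add: gamma_nonneg)
    have "gamma_p G p (restr G H c f) \<le> l1_norm G (restr G H c f)"
      by (rule gamma_le_l1[OF _ p]) (use restr_bounds[OF f] in auto)
    then show "gamma_p G p (restr G H c f) \<le> infsum f c" using l1_restr[OF c f] by simp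
  qed
qed

lemma gl1:
  assumes g: "l1_nonneg G g" and r: "1 \<le> r"
  shows "l1_nonneg (G Mod H) (\<lambda>c. lp_norm G r (restr G H c g))"
  unfolding l1_nonneg_def carrQ
proof
  show "\<forall>x\<in>rcosets H. 0 \<le> lp_norm G r (restr G H x g)" by (simp add: lp_nonneg)
  show "(\<lambda>c. lp_norm G r (restr G H c g)) summable_on rcosets H"
  proof (rule summable_on_comparison_test)
    show "(\<lambda>c. infsum g c) summable_on rcosets H" using partition[OF l1D(2)[OF g]] by simp
    fix c assume c: "c \<in> rcosets H"
    show "0 \<le> lp_norm G r (restr G H c g)" by (simp add: lp_nonneg)
    show "lp_norm G r (restr G H c g) \<le> infsum g c"
      using lp_le_l1(2)[OF restr_l1[OF g, of c] r] l1_restr[OF c g] by simp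
  qed
qed

lemma gnorm:
  assumes g: "l1_nonneg G g" and r: "1 \<le> r"
  shows "lp_norm (G Mod H) r (\<lambda>c. lp_norm G r (restr G H c g)) = lp_norm G r g"
proof -
  have "infsum (\<lambda>c. \<bar>lp_norm G r (restr G H c g)\<bar> powr r) (rcosets H)
      = infsum (\<lambda>c. infsum (\<lambda>a. \<bar>g a\<bar> powr r) c) (rcosets H)"
    by (rule infsum_cong) (use lp_restr[OF _ g] r in \<open>simp add: lp_nonneg\<close>)
  also have "\<dots> = infsum (\<lambda>a. \<bar>g a\<bar> powr r) (carrier G)"
    using partition[OF lp_le_l1(1)[OF g r]] by simp
  finally show ?thesis unfolding lp_norm_def carrQ by simp
qed

lemma gnz:
  assumes g: "l1_nonneg G g" and r: "1 \<le> r" and x: "x \<in> carrier G" "g x \<noteq> 0"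
  shows "\<exists>c\<in>carrier (G Mod H). lp_norm G r (restr G H c g) \<noteq> 0"
proof
  show "H #> x \<in> carrier (G Mod H)" by (rule phi_in[OF x(1)])
  have "restr G H (H #> x) g x \<noteq> 0" using x by (simp add: restr_def)
  then show "lp_norm G r (restr G H (H #> x) g) \<noteq> 0"
    using lp_pos[OF restr_l1[OF g, of "H #> x"] r x(1)] by simp
qed

end



context qsetup begin

lemma core:
  assumes f: "l1_nonneg G f" and g: "l1_nonneg G g" and h: "l1_nonneg G h" and p: "1 < p"
    and x: "x \<in> rcosets H" and y: "y \<in> rcosets H" and w: "w \<in> rcosets H"
  shows "gamma_p G p (restr G H x f) * lp_norm G p (restr G H y g) * lp_norm G (p / (p - 1)) (restr G H w h)
         \<le> infsum (mconv G (mconv G f g) h) (x \<otimes>\<^bsub>G Mod H\<^esub> y \<otimes>\<^bsub>G Mod H\<^esub> w)"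
proof -
  define z where "z = x \<otimes>\<^bsub>G Mod H\<^esub> y \<otimes>\<^bsub>G Mod H\<^esub> w"
  have mon: "monoid (G Mod H)" by (rule group.is_monoid[OF grpQ])
  have "z \<in> carrier (G Mod H)" unfolding z_def using x y w unfolding carrQ[symmetric]
    by (intro monoid.m_closed[OF mon])
  then have zC: "z \<in> rcosets H" by (simp only: carrQ)
  have zsub: "z \<subseteq> carrier G" by (rule coset_sub[OF zC])
  define k where "k = mconv G (mconv G f g) h"
  have fgl1: "l1_nonneg G (mconv G f g)" by (rule mconv_l1[OF f g])
  have kl1: "l1_nonneg G k" unfolding k_def by (rule mconv_l1[OF fgl1 h])
  have A0: "0 \<le> infsum k z" by (rule infsum_nonneg) (use zsub l1D(1)[OF kl1] in auto)
  define q where "q = p / (p - 1)"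
  have q: "1 \<le> q" unfolding q_def using p by simp
  define gy where "gy = lp_norm G p (restr G H y g)"
  define hw where "hw = lp_norm G q (restr G H w h)"
  have main: "gamma_p G p (restr G H x f) * gy * hw \<le> infsum k z"
  proof (cases "gy = 0 \<or> hw = 0")
    case True then show ?thesis using A0 by auto
  next
    case False
    then have gy0: "0 < gy" and hw0: "0 < hw" unfolding gy_def hw_def using lp_nonneg
      by (auto simp: less_le)
    obtain a1 where a1: "a1 \<in> carrier G" "restr G H y g a1 \<noteq> 0"
      using False lp_zero[of G "restr G H y g" p] unfolding gy_def by blast
    obtain a2 where a2: "a2 \<in> carrier G" "restr G H w h a2 \<noteq> 0"
      using False lp_zero[of G "restr G H w h" q] unfolding hw_def by blast
    define fx where "fx = restr G H x f"
    define gy' where "gy' = restr G H y g"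
    define hw' where "hw' = restr G H w h"
    have fxl: "l1_nonneg G fx" unfolding fx_def by (rule restr_l1[OF f])
    have gyl: "l1_nonneg G gy'" unfolding gy'_def by (rule restr_l1[OF g])
    have hwl: "l1_nonneg G hw'" unfolding hw'_def by (rule restr_l1[OF h])
    define k2 where "k2 = mconv G (mconv G fx gy') hw'"
    have m1: "l1_nonneg G (mconv G fx gy')" by (rule mconv_l1[OF fxl gyl])
    have k2l: "l1_nonneg G k2" unfolding k2_def by (rule mconv_l1[OF m1 hwl])
    have "gamma_p G p fx \<le> l1_norm G k2 / (gy * hw)"
      unfolding k2_def gy_def hw_def q_def gy'_def[symmetric] hw'_def[symmetric]
      by (rule gamma_le[OF gyl _ _ hwl]) (use a1 a2 gy'_def hw'_def in auto)
    then have step1: "gamma_p G p fx * gy * hw \<le> l1_norm G k2"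
      using gy0 hw0 by (simp add: pos_le_divide_eq mult.assoc)
    have supp: "k2 a = 0" if a: "a \<in> carrier G" "a \<notin> z" for a
    proof -
      have ne: "carrier G \<noteq> {}" by auto
      have "\<forall>s\<in>carrier G. mconv G fx gy' s * hw' (a \<otimes> inv s) = 0"
      proof
        fix s assume s: "s \<in> carrier G"
        show "mconv G fx gy' s * hw' (a \<otimes> inv s) = 0"
        proof (cases "hw' (a \<otimes> inv s) = 0")
          case True then show ?thesis by simp
        next
          case False
          then have as: "a \<otimes> inv s \<in> w" unfolding hw'_def using restr_eq[OF w] by (auto split: if_splits)
          have "\<forall>t\<in>carrier G. fx t * gy' (s \<otimes> inv t) = 0"
          proof
            fix t assume t: "t \<in> carrier G"
            show "fx t * gy' (s \<otimes> inv t) = 0"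
            proof (rule ccontr)
              assume "fx t * gy' (s \<otimes> inv t) \<noteq> 0"
              then have tx: "t \<in> x" and sy: "s \<otimes> inv t \<in> y"
                unfolding fx_def gy'_def using restr_eq[OF x] restr_eq[OF y] by (auto split: if_splits)
              have e1: "H #> t = x" using coset_mem[OF x t] tx by simp
              have e2: "H #> (s \<otimes> inv t) = y" using coset_mem[OF y] sy s t by simp
              have e3: "H #> (a \<otimes> inv s) = w" using coset_mem[OF w] as s a by simp
              have "H #> a = H #> (t \<otimes> (s \<otimes> inv t) \<otimes> (a \<otimes> inv s))" using alg3[OF t s a(1)] by simp
              also have "\<dots> = z" unfolding z_def using e1 e2 e3 s t a(1) by (simp add: phi_mult)
              finally have "a \<in> z" using coset_mem[OF zC a(1)] by simp
              then show False using a(2) by simp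
            qed
          qed
          then have "mconv G fx gy' s = (SUP t\<in>carrier G. (0::real))"
            unfolding mconv_def by (intro SUP_cong) auto
          then show ?thesis using ne by simp
        qed
      qed
      then have "k2 a = (SUP s\<in>carrier G. (0::real))"
        unfolding k2_def mconv_def[of G "mconv G fx gy'" hw' a] by (intro SUP_cong) auto
      then show ?thesis using ne by simp
    qed
    have "l1_norm G k2 = infsum k2 z" unfolding l1_norm_def
      by (rule infsum_cong_neutral) (use zsub supp l1D(1)[OF k2l] in auto)
    also have "\<dots> \<le> infsum k z"
    proof (rule infsum_mono)
      show "k2 summable_on z" by (rule summable_on_subset_banach[OF l1D(2)[OF k2l] zsub])
      show "k summable_on z" by (rule summable_on_subset_banach[OF l1D(2)[OF kl1] zsub])
      fix a assume "a \<in> z"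
      then have a: "a \<in> carrier G" using zsub by auto
      have b1: "0 \<le> mconv G fx gy' b \<and> mconv G fx gy' b \<le> mconv G f g b" if b: "b \<in> carrier G" for b
        using mconv_nonneg[OF fxl gyl b] mconv_mono[OF f g _ _ b, of fx gy']
          restr_bounds[OF f] restr_bounds[OF g] unfolding fx_def gy'_def by auto
      show "k2 a \<le> k a" unfolding k2_def k_def
        by (rule mconv_mono[OF fgl1 h _ _ a]) (use b1 restr_bounds[OF h] hw'_def in auto)
    qed
    finally show ?thesis using step1 unfolding fx_def gy'_def hw'_def by simp
  qed
  then show ?thesis by (simp add: z_def k_def gy_def hw_def q_def)
qed

end



context qsetup begin

lemma perz:
  assumes f: "l1_nonneg G f" and g: "l1_nonneg G g" and h: "l1_nonneg G h" and p: "1 < p"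
    and z: "z \<in> carrier (G Mod H)"
  shows "mconv (G Mod H) (mconv (G Mod H) (\<lambda>c. gamma_p G p (restr G H c f)) (\<lambda>c. lp_norm G p (restr G H c g)))
           (\<lambda>c. lp_norm G (p / (p - 1)) (restr G H c h)) z
         \<le> infsum (mconv G (mconv G f g) h) z"
proof -
  define Q where "Q = G Mod H"
  define F where "F = (\<lambda>c. gamma_p G p (restr G H c f))"
  define g' where "g' = (\<lambda>c. lp_norm G p (restr G H c g))"
  define h' where "h' = (\<lambda>c. lp_norm G (p / (p - 1)) (restr G H c h))"
  define A where "A = infsum (mconv G (mconv G f g) h) z"
  have gQ: "group Q" unfolding Q_def by (rule grpQ)
  have cQ': "comm_group Q" unfolding Q_def by (rule cQ)
  have ne: "carrier Q \<noteq> {}" using group.is_monoid[OF gQ] monoid.one_closed by blast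
  have zsub: "z \<subseteq> carrier G" using coset_sub z carrQ by simp
  have kl1: "l1_nonneg G (mconv G (mconv G f g) h)" by (intro mconv_l1 f g h)
  have A0: "0 \<le> A" unfolding A_def by (rule infsum_nonneg) (use zsub l1D(1)[OF kl1] in auto)
  have "mconv Q (mconv Q F g') h' z \<le> A"
    unfolding mconv_def[of Q "mconv Q F g'" h' z]
  proof (rule cSUP_least[OF ne])
    fix s assume s: "s \<in> carrier Q"
    define c where "c = h' (z \<otimes>\<^bsub>Q\<^esub> inv\<^bsub>Q\<^esub> s)"
    have c0: "0 \<le> c" unfolding c_def h'_def by (rule lp_nonneg)
    show "mconv Q F g' s * h' (z \<otimes>\<^bsub>Q\<^esub> inv\<^bsub>Q\<^esub> s) \<le> A"
    proof (cases "c = 0")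
      case True then show ?thesis using A0 by (simp add: c_def[symmetric])
    next
      case False
      then have cp: "0 < c" using c0 by simp
      have "mconv Q F g' s \<le> A / c"
        unfolding mconv_def
      proof (rule cSUP_least[OF ne])
        fix t assume t: "t \<in> carrier Q"
        have y: "s \<otimes>\<^bsub>Q\<^esub> inv\<^bsub>Q\<^esub> t \<in> carrier Q" using s t gQ by (simp add: group.subgroup_self subgroup.m_closed subgroup.m_inv_closed)
        have w: "z \<otimes>\<^bsub>Q\<^esub> inv\<^bsub>Q\<^esub> s \<in> carrier Q" using s z gQ unfolding Q_def[symmetric] by (simp add: group.subgroup_self subgroup.m_closed subgroup.m_inv_closed)
        have eq: "t \<otimes>\<^bsub>Q\<^esub> (s \<otimes>\<^bsub>Q\<^esub> inv\<^bsub>Q\<^esub> t) \<otimes>\<^bsub>Q\<^esub> (z \<otimes>\<^bsub>Q\<^esub> inv\<^bsub>Q\<^esub> s) = z"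
          using comm_group.alg3[OF cQ' t s] z unfolding Q_def by simp
        have "F t * g' (s \<otimes>\<^bsub>Q\<^esub> inv\<^bsub>Q\<^esub> t) * c \<le> A"
          using core[OF f g h p, of t "s \<otimes>\<^bsub>Q\<^esub> inv\<^bsub>Q\<^esub> t" "z \<otimes>\<^bsub>Q\<^esub> inv\<^bsub>Q\<^esub> s"] t y w eq
          unfolding F_def g'_def c_def h'_def A_def Q_def carrQ by simp
        then show "F t * g' (s \<otimes>\<^bsub>Q\<^esub> inv\<^bsub>Q\<^esub> t) \<le> A / c" using cp by (simp add: pos_le_divide_eq)
      qed
      then show ?thesis using cp by (simp add: pos_le_divide_eq c_def[symmetric])
    qed
  qed
  then show ?thesis unfolding Q_def F_def g'_def h'_def A_def .
qed

end



theorem mainTheorem12: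
  fixes G :: "('a, 'b) monoid_scheme" and H :: "'a set" and p :: real and f :: "'a \<Rightarrow> real"
  assumes "comm_group G"
    and "subgroup H G"
    and "1 < p"
    and "l1_nonneg G f"
  shows "gamma_p G p f \<ge>
           gamma_p (G Mod H) p
             (\<lambda>c. gamma_p G p (\<lambda>a. if a \<in> carrier G \<and> r_coset G H a = c then f a else 0))"
proof -
  interpret qsetup G H by (rule qsetup.intro[OF assms(1)]) (rule qsetup_axioms.intro[OF assms(2)])
  note p = assms(3) and f = assms(4)
  define Q where "Q = G Mod H"
  define F where "F = (\<lambda>c. gamma_p G p (restr G H c f))"
  have eqF: "(\<lambda>c. gamma_p G p (\<lambda>a. if a \<in> carrier G \<and> r_coset G H a = c then f a else 0)) = F"
    by (simp add: F_def restr_def)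
  define q where "q = p / (p - 1)"
  have q: "1 \<le> q" unfolding q_def using p by simp
  have gQ: "group Q" unfolding Q_def by (rule grpQ)
  have Fl: "l1_nonneg Q F" unfolding Q_def F_def by (rule Fl1[OF f p])
  have ge: "gamma_p Q p F \<le> r"
    if r: "r \<in> {l1_norm G (mconv G (mconv G f g) h) / (lp_norm G p g * lp_norm G (p / (p - 1)) h) | g h.
      l1_nonneg G g \<and> (\<exists>x\<in>carrier G. g x \<noteq> 0) \<and> l1_nonneg G h \<and> (\<exists>x\<in>carrier G. h x \<noteq> 0)}" for r
  proof -
    obtain g h x1 x2 where rdef: "r = l1_norm G (mconv G (mconv G f g) h) / (lp_norm G p g * lp_norm G q h)"
      and g: "l1_nonneg G g" and x1: "x1 \<in> carrier G" "g x1 \<noteq> 0"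
      and h: "l1_nonneg G h" and x2: "x2 \<in> carrier G" "h x2 \<noteq> 0"
      using r unfolding q_def by blast
    define g' where "g' = (\<lambda>c. lp_norm G p (restr G H c g))"
    define h' where "h' = (\<lambda>c. lp_norm G q (restr G H c h))"
    have g'l: "l1_nonneg Q g'" unfolding Q_def g'_def by (rule gl1[OF g]) (use p in simp)
    have h'l: "l1_nonneg Q h'" unfolding Q_def h'_def by (rule gl1[OF h q])
    obtain c1 where c1: "c1 \<in> carrier Q" "g' c1 \<noteq> 0" using gnz[OF g _ x1, of p] p unfolding Q_def g'_def by force
    obtain c2 where c2: "c2 \<in> carrier Q" "h' c2 \<noteq> 0" using gnz[OF h q x2] unfolding Q_def h'_def by force
    have ng: "lp_norm Q p g' = lp_norm G p g" unfolding Q_def g'_def by (rule gnorm[OF g]) (use p in simp)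
    have nh: "lp_norm Q q h' = lp_norm G q h" unfolding Q_def h'_def by (rule gnorm[OF h q])
    define kQ where "kQ = mconv Q (mconv Q F g') h'"
    define k where "k = mconv G (mconv G f g) h"
    have kQl: "l1_nonneg Q kQ" unfolding kQ_def
      by (intro group.mconv_l1[OF gQ] Fl g'l h'l)
    have kl: "l1_nonneg G k" unfolding k_def by (intro mconv_l1 f g h)
    have "gamma_p Q p F \<le> l1_norm Q kQ / (lp_norm Q p g' * lp_norm Q q h')"
      unfolding kQ_def q_def by (rule group.gamma_le[OF gQ g'l c1 h'l[unfolded q_def] c2[unfolded q_def]])
    also have "\<dots> = l1_norm Q kQ / (lp_norm G p g * lp_norm G q h)" using ng nh by simp
    also have "\<dots> \<le> l1_norm G k / (lp_norm G p g * lp_norm G q h)"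
    proof (rule divide_right_mono)
      show "0 \<le> lp_norm G p g * lp_norm G q h" by (simp add: lp_nonneg)
      have "l1_norm Q kQ = infsum kQ (rcosets\<^bsub>G\<^esub> H)" unfolding l1_norm_def Q_def carrQ[symmetric]
        by (rule infsum_cong) (use l1D(1)[OF kQl] Q_def in auto)
      also have "\<dots> \<le> infsum (\<lambda>z. infsum k z) (rcosets\<^bsub>G\<^esub> H)"
      proof (rule infsum_mono)
        show "kQ summable_on rcosets\<^bsub>G\<^esub> H" using l1D(2)[OF kQl] unfolding Q_def carrQ .
        show "(\<lambda>z. infsum k z) summable_on rcosets\<^bsub>G\<^esub> H" using partition[OF l1D(2)[OF kl]] by simp
        fix z assume "z \<in> rcosets\<^bsub>G\<^esub> H"
        then show "kQ z \<le> infsum k z"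
          using perz[OF f g h p, of z] unfolding kQ_def k_def Q_def F_def g'_def h'_def q_def carrQ by simp
      qed
      also have "\<dots> = infsum k (carrier G)" using partition[OF l1D(2)[OF kl]] by simp
      also have "\<dots> = l1_norm G k" unfolding l1_norm_def
        by (rule infsum_cong) (use l1D(1)[OF kl] in auto)
      finally show "l1_norm Q kQ \<le> l1_norm G k" .
    qed
    finally show ?thesis unfolding rdef k_def .
  qed
  have "gamma_p Q p F \<le> gamma_p G p f"
    unfolding gamma_p_def[of G p f]
  proof (rule cInf_greatest)
    have "delta (\<one>\<^bsub>G\<^esub>) \<noteq> 0" by (simp add: delta_def)
    then show "{l1_norm G (mconv G (mconv G f g) h) / (lp_norm G p g * lp_norm G (p / (p - 1)) h) | g h.
      l1_nonneg G g \<and> (\<exists>x\<in>carrier G. g x \<noteq> 0) \<and> l1_nonneg G h \<and> (\<exists>x\<in>carrier G. h x \<noteq> 0)} \<noteq> {}"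
      using delta_l1 by blast
  qed (rule ge)
  then show ?thesis unfolding eqF Q_def by simp
qed


end
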